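(* Consider an infinite balls-in-bins process with $d\ge2$ labeled bins: at each time $t=1,2,\ldots$ one ball is placed into a bin chosen uniformly at random from $\{1,\ldots,d\}$, independently over time, and $N^{(i)}_t$ denotes the number of balls in bin $i$ at time $t$. For every fixed $K\in\mathbb{N}$ there is a constant $C_{K,d}$ (independent of $t$) such that for all $t\ge1$, $$\Pr\big(\exists\, i\neq j:\ |N^{(i)}_t-N^{(j)}_t|\le K\big)\le\frac{C_{K,d}}{\sqrt t}.$$ *)

theory Defs
  imports "HOL-Probability.Probability"
begin

text \<open>The infinite balls-in-bins process with d bins labelled 1..d: an infinite
  i.i.d. sequence of uniformly random bin labels. The ball of time s (s = 1,2,...)
  is the stream entry at index s - 1.\<close>
definition bins_process :: "nat \<Rightarrow> nat stream measure" where
  "bins_process d = stream_space (measure_pmf (pmf_of_set {1..d}))"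

definition bin_load :: "nat \<Rightarrow> nat \<Rightarrow> nat stream \<Rightarrow> nat" where
  "bin_load i t \<omega> = card {s. s < t \<and> \<omega> !! s = i}"

end

theory Submission
  imports Defs
begin


lemma card_lists_Suc:
  assumes "finite A"
  shows "card {xs. set xs \<subseteq> A \<and> length xs = Suc t \<and> P xs}
       = (\<Sum>x\<in>A. card {xs. set xs \<subseteq> A \<and> length xs = t \<and> P (x # xs)})"
proof -
  have eq: "{xs. set xs \<subseteq> A \<and> length xs = Suc t \<and> P xs}
      = (\<Union>x\<in>A. (\<lambda>xs. x # xs) ` {xs. set xs \<subseteq> A \<and> length xs = t \<and> P (x # xs)})"
    by (auto simp: length_Suc_conv)
  have fin: "finite {xs. set xs \<subseteq> A \<and> length xs = t \<and> P (x # xs)}" for x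
    by (rule finite_subset[OF _ finite_lists_length_eq[OF assms, of t]]) auto
  show ?thesis
    unfolding eq
    by (subst card_UN_disjoint) (auto simp: assms fin card_image)
qed

lemma measure_stake:
  fixes A :: "'a::countable set"
  assumes A: "finite A" "A \<noteq> {}"
  shows "measure (stream_space (measure_pmf (pmf_of_set A))) {\<omega> \<in> space (stream_space (measure_pmf (pmf_of_set A))). P (stake t \<omega>)}
      = card {xs. set xs \<subseteq> A \<and> length xs = t \<and> P xs} / card A ^ t"
proof (induction t arbitrary: P)
  case 0
  interpret S: prob_space "stream_space (measure_pmf (pmf_of_set A))"
    by (rule prob_space.prob_space_stream_space[OF prob_space_measure_pmf])
  show ?case
  proof (cases "P []")
    case True
    then have "{xs. set xs \<subseteq> A \<and> length xs = 0 \<and> P xs} = {[]}" by auto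
    with True show ?thesis by (simp add: S.prob_space)
  qed auto
next
  case (Suc t)
  let ?M = "measure_pmf (pmf_of_set A)"
  interpret S: prob_space "stream_space ?M"
    by (rule prob_space.prob_space_stream_space[OF prob_space_measure_pmf])
  have meas: "{x \<in> space (stream_space ?M). Q (stake n x)} \<in> sets (stream_space ?M)" for Q n
  proof -
    have "sets (stream_space ?M) = sets (stream_space (count_space UNIV))"
      by (rule sets_stream_space_cong) simp
    moreover have "space (stream_space ?M) = space (stream_space (count_space (UNIV::'a set)))"
      by (simp add: space_stream_space)
    moreover have "{x \<in> space (stream_space (count_space UNIV)). Q (stake n x)} \<in> sets (stream_space (count_space (UNIV::'a set)))"
      by measurable
    ultimately show ?thesis by simp
  qed
  have "ennreal (measure (stream_space ?M) {\<omega> \<in> space (stream_space ?M). P (stake (Suc t) \<omega>)})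
     = (\<integral>\<^sup>+x. ennreal (measure (stream_space ?M) {\<omega> \<in> space (stream_space ?M). P (stake (Suc t) (x ## \<omega>))}) \<partial>?M)"
    by (rule prob_space.prob_stream_space[OF prob_space_measure_pmf meas])
  also have "\<dots> = (\<integral>\<^sup>+x. ennreal (card {xs. set xs \<subseteq> A \<and> length xs = t \<and> P (x # xs)} / card A ^ t) \<partial>?M)"
    using Suc.IH[of "\<lambda>xs. P (_ # xs)"] by simp
  also have "\<dots> = (\<Sum>x\<in>A. ennreal (card {xs. set xs \<subseteq> A \<and> length xs = t \<and> P (x # xs)} / card A ^ t)) / card A"
    using A by (simp add: nn_integral_pmf_of_set)
  also have "\<dots> = ennreal ((\<Sum>x\<in>A. card {xs. set xs \<subseteq> A \<and> length xs = t \<and> P (x # xs)} / card A ^ t) / card A)"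
    using A by (simp add: divide_ennreal sum_nonneg ennreal_of_nat_eq_real_of_nat card_gt_0_iff)
  also have "(\<Sum>x\<in>A. card {xs. set xs \<subseteq> A \<and> length xs = t \<and> P (x # xs)} / card A ^ t) / card A
     = card {xs. set xs \<subseteq> A \<and> length xs = Suc t \<and> P xs} / card A ^ Suc t"
    using A by (simp add: card_lists_Suc sum_divide_distrib[symmetric] field_simps)
  finally show ?case by (simp add: ennreal_inj)
qed


definition T :: "nat \<Rightarrow> nat \<Rightarrow> nat \<Rightarrow> nat \<Rightarrow> nat" where
  "T n t a b = (if a + b \<le> t then (t choose (a+b)) * ((a+b) choose a) * n ^ (t - (a+b)) else 0)"

lemma T_0: "T n 0 a b = (if a = 0 \<and> b = 0 then 1 else 0)"
  by (auto simp: T_def)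

lemma pascal_ab:
  assumes "a + b > 0"
  shows "(if a = 0 then 0 else (a + b - 1) choose (a - 1)) + (if b = 0 then 0 else (a + b - 1) choose a)
      = (a + b) choose a"
proof (cases a)
  case 0 then show ?thesis using assms by simp
next
  case (Suc a')
  show ?thesis
  proof (cases b)
    case 0 then show ?thesis using Suc by simp
  next
    case (Suc b')
    with \<open>a = Suc a'\<close> show ?thesis by simp
  qed
qed

lemma T_Suc:
  "T n (Suc t) a b = (if a = 0 then 0 else T n t (a-1) b) + (if b = 0 then 0 else T n t a (b-1)) + n * T n t a b"
proof -
  consider "a + b > Suc t" | "a + b = Suc t" | "a + b \<le> t" by linarith
  then show ?thesis
  proof cases
    case 1 then show ?thesis by (auto simp: T_def)
  next
    case 2
    have l: "T n (Suc t) a b = (a+b) choose a" using 2 by (simp add: T_def)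
    have r1: "(if a = 0 then 0 else T n t (a-1) b) = (if a = 0 then 0 else (a + b - 1) choose (a - 1))"
      using 2 by (auto simp: T_def)
    have r2: "(if b = 0 then 0 else T n t a (b-1)) = (if b = 0 then 0 else (a + b - 1) choose a)"
      using 2 by (auto simp: T_def)
    have r3: "T n t a b = 0" using 2 by (simp add: T_def)
    show ?thesis using pascal_ab[of a b] 2 l r1 r2 r3 by simp
  next
    case 3
    show ?thesis
    proof (cases "a + b = 0")
      case True then show ?thesis using 3 by (simp add: T_def)
    next
      case False
      define m where "m = a + b"
      define c where "c = t - m"
      have tm: "t = m + c" "Suc t - m = Suc c" using 3 by (auto simp: m_def c_def)
      have mpos: "m > 0" using False m_def by simp
      have r1: "(if a = 0 then 0 else T n t (a-1) b) = (if a = 0 then 0 else (t choose (m-1)) * ((m-1) choose (a-1)) * n ^ Suc c)"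
        using 3 mpos by (auto simp: T_def m_def c_def Suc_diff_le)
      have r2: "(if b = 0 then 0 else T n t a (b-1)) = (if b = 0 then 0 else (t choose (m-1)) * ((m-1) choose a) * n ^ Suc c)"
        using 3 mpos by (auto simp: T_def m_def c_def Suc_diff_le)
      have r12: "(if a = 0 then 0 else T n t (a-1) b) + (if b = 0 then 0 else T n t a (b-1))
          = (t choose (m-1)) * (m choose a) * n ^ Suc c"
      proof -
        have "(if a = 0 then 0 else (t choose (m-1)) * ((m-1) choose (a-1)) * n ^ Suc c)
            + (if b = 0 then 0 else (t choose (m-1)) * ((m-1) choose a) * n ^ Suc c)
            = (t choose (m-1)) * ((if a = 0 then 0 else (a + b - 1) choose (a - 1)) + (if b = 0 then 0 else (a + b - 1) choose a)) * n ^ Suc c"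
          by (simp add: m_def algebra_simps)
        also have "\<dots> = (t choose (m-1)) * (m choose a) * n ^ Suc c"
          using pascal_ab[of a b] False by (simp add: m_def)
        finally show ?thesis using r1 r2 by simp
      qed
      have r3: "n * T n t a b = (t choose m) * (m choose a) * n ^ Suc c"
        using 3 by (simp add: T_def m_def c_def)
      have l: "T n (Suc t) a b = (Suc t choose m) * (m choose a) * n ^ Suc c"
        using 3 tm by (simp add: T_def m_def)
      have pas: "Suc t choose m = (t choose (m-1)) + (t choose m)"
        using mpos by (cases m) auto
      show ?thesis by (simp only: r12 r3 l pas) (simp add: algebra_simps)
    qed
  qed
qed

lemma Q_Suc:
  assumes "finite A" "i \<in> A" "j \<in> A" "i \<noteq> j"
  shows "card {xs. set xs \<subseteq> A \<and> length xs = Suc t \<and> count_list xs i = a \<and> count_list xs j = b}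
    = (if a = 0 then 0 else card {xs. set xs \<subseteq> A \<and> length xs = t \<and> count_list xs i = a - 1 \<and> count_list xs j = b})
    + (if b = 0 then 0 else card {xs. set xs \<subseteq> A \<and> length xs = t \<and> count_list xs i = a \<and> count_list xs j = b - 1})
    + (card A - 2) * card {xs. set xs \<subseteq> A \<and> length xs = t \<and> count_list xs i = a \<and> count_list xs j = b}"
proof -
  let ?Q = "\<lambda>P. card {xs. set xs \<subseteq> A \<and> length xs = t \<and> P xs}"
  have A: "A = insert i (insert j (A - {i, j}))" using assms by auto
  have "card {xs. set xs \<subseteq> A \<and> length xs = Suc t \<and> count_list xs i = a \<and> count_list xs j = b}
     = (\<Sum>x\<in>A. ?Q (\<lambda>xs. count_list (x # xs) i = a \<and> count_list (x # xs) j = b))"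
    by (rule card_lists_Suc[OF assms(1)])
  also have "\<dots> = ?Q (\<lambda>xs. count_list (i # xs) i = a \<and> count_list (i # xs) j = b)
      + ?Q (\<lambda>xs. count_list (j # xs) i = a \<and> count_list (j # xs) j = b)
      + (\<Sum>x\<in>A - {i,j}. ?Q (\<lambda>xs. count_list (x # xs) i = a \<and> count_list (x # xs) j = b))"
    using assms by (subst A) (simp add: sum.insert_remove insert_Diff_if)
  also have "(\<Sum>x\<in>A - {i,j}. ?Q (\<lambda>xs. count_list (x # xs) i = a \<and> count_list (x # xs) j = b))
      = (\<Sum>x\<in>A - {i,j}. ?Q (\<lambda>xs. count_list xs i = a \<and> count_list xs j = b))"
    by (rule sum.cong) auto
  also have "\<dots> = (card A - 2) * ?Q (\<lambda>xs. count_list xs i = a \<and> count_list xs j = b)"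
    using assms by (simp add: card_Diff_subset numeral_2_eq_2)
  also have "?Q (\<lambda>xs. count_list (i # xs) i = a \<and> count_list (i # xs) j = b)
      = (if a = 0 then 0 else ?Q (\<lambda>xs. count_list xs i = a - 1 \<and> count_list xs j = b))"
    using assms by (cases a) auto
  also have "?Q (\<lambda>xs. count_list (j # xs) i = a \<and> count_list (j # xs) j = b)
      = (if b = 0 then 0 else ?Q (\<lambda>xs. count_list xs i = a \<and> count_list xs j = b - 1))"
    using assms by (cases b) auto
  finally show ?thesis .
qed

lemma Q_eq_T:
  assumes "finite A" "i \<in> A" "j \<in> A" "i \<noteq> j"
  shows "card {xs. set xs \<subseteq> A \<and> length xs = t \<and> count_list xs i = a \<and> count_list xs j = b}
    = T (card A - 2) t a b"
proof (induction t arbitrary: a b)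
  case 0
  have "{xs. set xs \<subseteq> A \<and> length xs = 0 \<and> count_list xs i = a \<and> count_list xs j = b}
      = (if a = 0 \<and> b = 0 then {[]} else {})" by auto
  then show ?case by (simp add: T_0)
next
  case (Suc t)
  show ?case by (simp only: Q_Suc[OF assms] Suc.IH T_Suc)
qed



declare binomial_Suc_Suc[simp del]

lemma cb_rel1: "real ((2*n+1) choose n) * (n+1) = (2*n+1) * real ((2*n) choose n)"
proof -
  have "Suc (2*n) * ((2*n) choose n) = (Suc (2*n) choose Suc n) * Suc n"
    by (rule Suc_times_binomial_eq)
  moreover have "(Suc (2*n) choose Suc n) = (Suc (2*n) choose n)"
    using binomial_symmetric[of "Suc n" "Suc (2*n)"] by simp
  ultimately have "(2*n+1) * ((2*n) choose n) = ((2*n+1) choose n) * (n+1)" by simp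
  then have "real ((2*n+1) * ((2*n) choose n)) = real (((2*n+1) choose n) * (n+1))" by metis
  then show ?thesis by (simp add: algebra_simps)
qed

lemma cb_rel2: "real ((2*n+2) choose (n+1)) = 2 * real ((2*n+1) choose n)"
proof -
  have "Suc (2*n+1) * ((2*n+1) choose n) = (Suc (2*n+1) choose Suc n) * Suc n"
    by (rule Suc_times_binomial_eq)
  then have "real (Suc (2*n+1) * ((2*n+1) choose n)) = real ((Suc (2*n+1) choose Suc n) * Suc n)" by metis
  then have "(2*real n+2) * real ((2*n+1) choose n) = real ((2*n+2) choose (n+1)) * (real n + 1)" by (simp add: algebra_simps)
  then have "(real n + 1) * (2 * real ((2*n+1) choose n)) = (real n + 1) * real ((2*n+2) choose (n+1))"
    by (simp add: algebra_simps)
  then show ?thesis by (smt (verit) mult_cancel_left of_nat_0_le_iff)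
qed

lemma cb_step_aux:
  fixes C1 C2 B x :: real
  assumes "x \<ge> 0" "C1 * (x+1) = (2*x+1) * B" "C2 = 2 * C1"
  shows "C2^2 * (2*x+3) \<le> 16 * (B^2 * (2*x+1))"
proof -
  have C1: "C1 = (2*x+1) * B / (x+1)" using assms by (simp add: field_simps)
  have "C2^2 * (2*x+3) = (4 * (2*x+1) * (2*x+3) / (x+1)^2) * (B^2 * (2*x+1))"
    using assms(1) by (simp add: assms(3) C1 power2_eq_square field_simps)
  also have "\<dots> \<le> 16 * (B^2 * (2*x+1))"
  proof (rule mult_right_mono)
    have "4 * (2*x+1) * (2*x+3) \<le> 16 * (x+1)^2" by (simp add: power2_eq_square algebra_simps)
    then show "4 * (2*x+1) * (2*x+3) / (x+1)^2 \<le> 16" using assms(1) by (simp add: field_simps)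
  qed (use assms(1) in simp)
  finally show ?thesis .
qed

lemma cb_even: "real ((2*n) choose n)^2 * (2*n+1) \<le> 16^n"
proof (induction n)
  case 0 then show ?case by simp
next
  case (Suc n)
  have "real ((2*n+2) choose (n+1))^2 * (2*real n+3) \<le> 16 * (real ((2*n) choose n)^2 * (2*real n+1))"
    by (rule cb_step_aux[OF _ cb_rel1[of n] cb_rel2[of n]]) simp
  also have "\<dots> \<le> 16 * 16^n"
  proof -
    have "real (2*n+1) = 2*real n+1" by simp
    then show ?thesis using Suc.IH by (simp only:)
  qed
  also have "\<dots> = 16^(n+1)" by simp
  finally have *: "real ((2*n+2) choose (n+1))^2 * (2*real n+3) \<le> 16^(n+1)" .
  have e1: "2 * Suc n = 2*n+2" "Suc n = n+1" by simp_all
  have e2: "real (2*Suc n+1) = 2*real n+3" by simp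
  show ?case unfolding e2 unfolding e1(1) unfolding e1(2) by (rule *)
qed

lemma cb_odd_aux:
  fixes C B x S :: real
  assumes "x \<ge> 0" "C * (x+1) = (2*x+1) * B" "B^2 * (2*x+1) \<le> S"
  shows "C^2 * (2*x+2) \<le> 4 * S"
proof -
  have S0: "S \<ge> 0" using assms(1,3) by (smt (verit) mult_nonneg_nonneg zero_le_power2)
  have "(C^2*(2*x+2))*(x+1) = 2 * (C*(x+1))^2" by (simp add: power2_eq_square algebra_simps)
  also have "\<dots> = 2*(2*x+1) * (B^2*(2*x+1))" using assms(2) by (simp add: power2_eq_square algebra_simps)
  also have "\<dots> \<le> 2*(2*x+1) * S" using assms(1,3) by (intro mult_left_mono) auto
  also have "\<dots> \<le> (4*S)*(x+1)" using S0 assms(1) by (simp add: algebra_simps)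
  finally show ?thesis using assms(1) by (smt (verit) mult_right_le_imp_le)
qed

lemma cb: "real (m choose (m div 2))^2 * (m+1) \<le> 4^m"
proof (cases "even m")
  case True
  then obtain n where m: "m = 2*n" by auto
  have "(4::real)^m = 16^n" by (simp add: m power_mult)
  then show ?thesis using cb_even[of n] by (simp add: m)
next
  case False
  then obtain n where m: "m = 2*n+1" using oddE by blast
  have md: "m div 2 = n" by (simp add: m)
  have "real ((2*n+1) choose n)^2 * (2*real n+2) \<le> 4 * 16^n"
    by (rule cb_odd_aux[OF _ cb_rel1[of n]]) (use cb_even[of n] in \<open>simp_all add: add.commute\<close>)
  moreover have "(4::real)^m = 4 * 16^n" by (simp add: m power_mult power_add)
  moreover have "real (m+1) = 2*real n+2" by (simp add: m)
  ultimately show ?thesis unfolding md by (simp only: m)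
qed



lemma card_diff_le:
  assumes A: "finite A" "i \<in> A" "j \<in> A" "i \<noteq> j"
  shows "card {xs. set xs \<subseteq> A \<and> length xs = t \<and> int (count_list xs i) - int (count_list xs j) = k}
    \<le> (\<Sum>m\<le>t. (t choose m) * (m choose (m div 2)) * (card A - 2)^(t-m))"
proof -
  let ?n = "card A - 2"
  define \<phi> where "\<phi> a = a + nat (int a - k)" for a
  define h where "h m = (if m \<le> t then (t choose m) * (m choose (m div 2)) * ?n^(t-m) else 0)" for m
  let ?S = "\<lambda>a. {xs. set xs \<subseteq> A \<and> length xs = t \<and> count_list xs i = a \<and> count_list xs j = nat (int a - k)}"
  have fin: "finite (?S a)" for a
    by (rule finite_subset[OF _ finite_lists_length_eq[OF A(1), of t]]) auto
  have sub: "{xs. set xs \<subseteq> A \<and> length xs = t \<and> int (count_list xs i) - int (count_list xs j) = k}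
      \<subseteq> (\<Union>a\<in>{..t}. ?S a)"
  proof
    fix xs assume xs: "xs \<in> {xs. set xs \<subseteq> A \<and> length xs = t \<and> int (count_list xs i) - int (count_list xs j) = k}"
    then have "count_list xs i \<le> t" using count_le_length[of xs i] by auto
    moreover have "count_list xs j = nat (int (count_list xs i) - k)" using xs by auto
    ultimately show "xs \<in> (\<Union>a\<in>{..t}. ?S a)" using xs by auto
  qed
  have "card {xs. set xs \<subseteq> A \<and> length xs = t \<and> int (count_list xs i) - int (count_list xs j) = k}
      \<le> card (\<Union>a\<in>{..t}. ?S a)"
    by (rule card_mono[OF _ sub]) (use fin in auto)
  also have "\<dots> \<le> (\<Sum>a\<le>t. card (?S a))"
    by (rule card_UN_le) simp
  also have "\<dots> = (\<Sum>a\<le>t. T ?n t a (nat (int a - k)))"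
    using Q_eq_T[OF A] by simp
  also have "\<dots> \<le> (\<Sum>a\<le>t. h (\<phi> a))"
  proof (rule sum_mono)
    fix a
    show "T ?n t a (nat (int a - k)) \<le> h (\<phi> a)"
      unfolding T_def h_def \<phi>_def by (auto intro: binomial_maximum)
  qed
  also have "\<dots> = (\<Sum>m\<in>\<phi> ` {..t}. h m)"
  proof -
    have mono: "a < a' \<Longrightarrow> \<phi> a < \<phi> a'" for a a'
      unfolding \<phi>_def using nat_mono[of "int a - k" "int a' - k"] by linarith
    have "inj_on \<phi> {..t}"
    proof (rule inj_onI)
      fix a a' assume "\<phi> a = \<phi> a'"
      then show "a = a'" using mono[of a a'] mono[of a' a] by (cases a a' rule: linorder_cases) auto
    qed
    then show ?thesis by (simp add: sum.reindex)
  qed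
  also have "\<dots> = (\<Sum>m\<in>\<phi> ` {..t} \<inter> {..t}. h m)"
    by (rule sum.mono_neutral_right) (auto simp: h_def)
  also have "\<dots> \<le> (\<Sum>m\<le>t. h m)"
    by (rule sum_mono2) auto
  also have "\<dots> = (\<Sum>m\<le>t. (t choose m) * (m choose (m div 2)) * ?n^(t-m))"
    by (rule sum.cong) (auto simp: h_def)
  finally show ?thesis .
qed



lemma cb_sqrt: "real (m choose (m div 2)) \<le> 2^m / sqrt (real m + 1)"
proof -
  have e1: "(real (m choose (m div 2)) * sqrt (real m + 1))^2 = real (m choose (m div 2))^2 * (real m + 1)"
    by (simp add: power_mult_distrib)
  have e2: "((2::real)^m)^2 = 4^m"
    by (simp only: power_mult[symmetric] mult.commute[of m 2]) (simp add: power_mult)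
  have "(real (m choose (m div 2)) * sqrt (real m + 1))^2 \<le> (2^m)^2"
    unfolding e1 e2 using cb[of m] by (simp add: add.commute)
  then have "real (m choose (m div 2)) * sqrt (real m + 1) \<le> 2^m"
    by (rule power2_le_imp_le) simp
  then show ?thesis by (simp add: field_simps)
qed

lemma binom_sum: "(\<Sum>m\<le>t. real (t choose m) * 2^m * real n^(t-m)) = (real n + 2)^t"
  using binomial_ring[of "2::real" "real n" t] by (simp add: add.commute)

lemma inv_sum: "(\<Sum>m\<le>t. real (t choose m) * 2^m * real n^(t-m) / (real m + 1)) \<le> (real n + 2)^(t+1) / (real t + 1)"
proof -
  have eq: "real (t choose m) / (real m + 1) = real (Suc t choose Suc m) / (real t + 1)" for m
  proof -
    have "Suc m * (Suc t choose Suc m) = Suc t * (t choose m)" by (rule Suc_times_binomial)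
    then have "(real m + 1) * real (Suc t choose Suc m) = (real t + 1) * real (t choose m)"
      by (metis of_nat_Suc of_nat_mult add.commute)
    then show ?thesis by (simp add: field_simps)
  qed
  have "(\<Sum>m\<le>t. real (t choose m) * 2^m * real n^(t-m) / (real m + 1))
      = (\<Sum>m\<le>t. real (Suc t choose Suc m) * 2^(Suc m) * real n^(Suc t - Suc m)) / (2 * (real t + 1))"
    unfolding sum_divide_distrib
  proof (rule sum.cong)
    fix m assume "m \<in> {..t}"
    have "real (t choose m) * 2^m * real n^(t-m) / (real m + 1) = (real (t choose m) / (real m + 1)) * 2^m * real n^(t-m)"
      by simp
    also have "\<dots> = real (Suc t choose Suc m) * 2^(Suc m) * real n^(Suc t - Suc m) / (2 * (real t + 1))"
      unfolding eq by (simp add: field_simps)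
    finally show "real (t choose m) * 2^m * real n^(t-m) / (real m + 1) = real (Suc t choose Suc m) * 2^(Suc m) * real n^(Suc t - Suc m) / (2 * (real t + 1))" .
  qed simp
  also have "\<dots> \<le> (\<Sum>m\<le>Suc t. real (Suc t choose m) * 2^m * real n^(Suc t - m)) / (2 * (real t + 1))"
  proof (rule divide_right_mono)
    let ?f = "\<lambda>m. real (Suc t choose m) * 2^m * real n^(Suc t - m)"
    have "(\<Sum>m\<le>t. ?f (Suc m)) \<le> ?f 0 + (\<Sum>m\<le>t. ?f (Suc m))" by simp
    also have "\<dots> = (\<Sum>m\<le>Suc t. ?f m)" by (rule sum.atMost_Suc_shift[symmetric])
    finally show "(\<Sum>m\<le>t. ?f (Suc m)) \<le> (\<Sum>m\<le>Suc t. ?f m)" .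
  qed simp
  also have "\<dots> = (real n + 2)^(t+1) / (2 * (real t + 1))"
    by (simp only: binom_sum) simp
  also have "\<dots> \<le> (real n + 2)^(t+1) / (real t + 1)"
    by (simp add: frac_le)
  finally show ?thesis .
qed

lemma amgm: fixes y l :: real assumes "l > 0" shows "y \<le> (l + y^2 / l) / 2"
proof -
  have "0 \<le> (l - y)^2" by simp
  then have "2 * l * y \<le> l^2 + y^2" by (simp add: power2_eq_square algebra_simps)
  then show ?thesis using assms by (simp add: field_simps power2_eq_square)
qed

lemma main_sum_bound:
  fixes n t :: nat
  shows "(\<Sum>m\<le>t. real ((t choose m) * (m choose (m div 2)) * n^(t-m)))
     \<le> (real n + 2)^t * sqrt ((real n + 2) / (real t + 1))"
proof -
  define l where "l = sqrt ((real n + 2) / (real t + 1))"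
  have l0: "l > 0" unfolding l_def by simp
  have l2: "l^2 = (real n + 2) / (real t + 1)" unfolding l_def by simp
  define w where "w m = real (t choose m) * 2^m * real n^(t-m)" for m
  have w0: "w m \<ge> 0" for m by (simp add: w_def)
  have "(\<Sum>m\<le>t. real ((t choose m) * (m choose (m div 2)) * n^(t-m)))
      \<le> (\<Sum>m\<le>t. w m * (1 / sqrt (real m + 1)))"
  proof (rule sum_mono)
    fix m
    have "real ((t choose m) * (m choose (m div 2)) * n^(t-m)) = (real (t choose m) * real n^(t-m)) * real (m choose (m div 2))"
      by simp
    also have "\<dots> \<le> (real (t choose m) * real n^(t-m)) * (2^m / sqrt (real m + 1))"
      by (rule mult_left_mono[OF cb_sqrt]) simp
    also have "\<dots> = w m * (1 / sqrt (real m + 1))" by (simp add: w_def)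
    finally show "real ((t choose m) * (m choose (m div 2)) * n^(t-m)) \<le> w m * (1 / sqrt (real m + 1))" .
  qed
  also have "\<dots> \<le> (\<Sum>m\<le>t. w m * ((l + (1 / sqrt (real m + 1))^2 / l) / 2))"
    by (rule sum_mono, rule mult_left_mono[OF amgm[OF l0] w0])
  also have "\<dots> = (l * (\<Sum>m\<le>t. w m) + (\<Sum>m\<le>t. w m / (real m + 1)) / l) / 2"
  proof -
    have "(\<Sum>m\<le>t. w m * ((l + (1 / sqrt (real m + 1))^2 / l) / 2))
        = (\<Sum>m\<le>t. (l * w m + (w m / (real m + 1)) / l) / 2)"
    proof (rule sum.cong)
      fix m
      have "(1 / sqrt (real m + 1))^2 = 1 / (real m + 1)"
        by (simp add: power_divide)
      then show "w m * ((l + (1 / sqrt (real m + 1))^2 / l) / 2) = (l * w m + (w m / (real m + 1)) / l) / 2"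
        by (simp add: field_simps)
    qed simp
    also have "\<dots> = (l * (\<Sum>m\<le>t. w m) + (\<Sum>m\<le>t. w m / (real m + 1)) / l) / 2"
      by (simp only: sum_divide_distrib[symmetric] sum.distrib sum_distrib_left)
    finally show ?thesis .
  qed
  also have "\<dots> \<le> (l * (real n + 2)^t + ((real n + 2)^(t+1) / (real t + 1)) / l) / 2"
    using inv_sum[of t n] binom_sum[of t n] l0 unfolding w_def
    by (intro divide_right_mono add_mono divide_right_mono) auto
  also have "((real n + 2)^(t+1) / (real t + 1)) / l = (real n + 2)^t * l"
  proof -
    have "((real n + 2)^(t+1) / (real t + 1)) / l = (real n + 2)^t * (((real n + 2) / (real t + 1)) / l)"
      by (simp add: algebra_simps)
    also have "((real n + 2) / (real t + 1)) / l = l" using l0 by (simp add: l2[symmetric] power2_eq_square)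
    finally show ?thesis .
  qed
  finally show ?thesis by (simp add: l_def algebra_simps)
qed



lemma bin_load_stake: "bin_load i t \<omega> = count_list (stake t \<omega>) i"
proof (induction t)
  case 0 then show ?case by (simp add: bin_load_def)
next
  case (Suc t)
  have "{s. s < Suc t \<and> \<omega> !! s = i} = {s. s < t \<and> \<omega> !! s = i} \<union> (if \<omega> !! t = i then {t} else {})"
    by (auto simp: less_Suc_eq)
  then have "bin_load i (Suc t) \<omega> = bin_load i t \<omega> + (if \<omega> !! t = i then 1 else 0)"
    by (auto simp: bin_load_def)
  then show ?case using Suc.IH unfolding stake_Suc count_list_append by simp
qed

theorem lemma4p10:
  fixes d K :: nat
  assumes "d \<ge> 2"
  shows "\<exists>C::real. \<forall>t::nat. t \<ge> 1 \<longrightarrow>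
    measure (bins_process d)
      {\<omega> \<in> space (bins_process d). \<exists>i\<in>{1..d}. \<exists>j\<in>{1..d}. i \<noteq> j \<and>
          \<bar>int (bin_load i t \<omega>) - int (bin_load j t \<omega>)\<bar> \<le> int K}
    \<le> C / sqrt (real t)"
proof (intro exI allI impI)
  fix t :: nat assume t: "t \<ge> 1"
  define A where "A = {1..d}"
  have Afin: "finite A" and Ane: "A \<noteq> {}" and cA: "card A = d" using assms by (auto simp: A_def)
  define P where "P xs = (\<exists>i\<in>A. \<exists>j\<in>A. i \<noteq> j \<and> \<bar>int (count_list xs i) - int (count_list xs j)\<bar> \<le> int K)" for xs
  define B where "B = (\<Sum>m\<le>t. (t choose m) * (m choose (m div 2)) * (d - 2)^(t-m))"
  define W where "W = {xs. set xs \<subseteq> A \<and> length xs = t \<and> P xs}"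
  let ?D = "\<lambda>i j k. {xs. set xs \<subseteq> A \<and> length xs = t \<and> int (count_list xs i) - int (count_list xs j) = k}"
  have eqset: "{\<omega> \<in> space (bins_process d). \<exists>i\<in>{1..d}. \<exists>j\<in>{1..d}. i \<noteq> j \<and>
          \<bar>int (bin_load i t \<omega>) - int (bin_load j t \<omega>)\<bar> \<le> int K}
      = {\<omega> \<in> space (stream_space (measure_pmf (pmf_of_set A))). P (stake t \<omega>)}"
    by (simp add: bins_process_def A_def P_def bin_load_stake)
  have meas: "measure (bins_process d) {\<omega> \<in> space (bins_process d). \<exists>i\<in>{1..d}. \<exists>j\<in>{1..d}. i \<noteq> j \<and>
          \<bar>int (bin_load i t \<omega>) - int (bin_load j t \<omega>)\<bar> \<le> int K}
      = card W / real d ^ t"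
    unfolding eqset using measure_stake[OF Afin Ane, of P t] by (simp add: bins_process_def W_def cA A_def)
  have finD: "finite (?D i j k)" for i j k
    by (rule finite_subset[OF _ finite_lists_length_eq[OF Afin, of t]]) auto
  have "W \<subseteq> (\<Union>i\<in>A. \<Union>j\<in>A - {i}. \<Union>k\<in>{-int K..int K}. ?D i j k)"
  proof
    fix xs assume "xs \<in> W"
    then obtain i j where ij: "set xs \<subseteq> A" "length xs = t" "i \<in> A" "j \<in> A" "i \<noteq> j"
      "\<bar>int (count_list xs i) - int (count_list xs j)\<bar> \<le> int K"
      unfolding W_def P_def by blast
    then have "int (count_list xs i) - int (count_list xs j) \<in> {-int K..int K}" by auto
    then have "xs \<in> (\<Union>k\<in>{-int K..int K}. ?D i j k)" using ij by blast
    then show "xs \<in> (\<Union>i\<in>A. \<Union>j\<in>A - {i}. \<Union>k\<in>{-int K..int K}. ?D i j k)" using ij by blast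
  qed
  then have "card W \<le> card (\<Union>i\<in>A. \<Union>j\<in>A - {i}. \<Union>k\<in>{-int K..int K}. ?D i j k)"
    by (rule card_mono[rotated]) (use Afin finD in auto)
  also have "\<dots> \<le> (\<Sum>i\<in>A. card (\<Union>j\<in>A - {i}. \<Union>k\<in>{-int K..int K}. ?D i j k))"
    by (rule card_UN_le) (use Afin in auto)
  also have "\<dots> \<le> (\<Sum>i\<in>A. \<Sum>j\<in>A - {i}. card (\<Union>k\<in>{-int K..int K}. ?D i j k))"
    by (rule sum_mono, rule card_UN_le) (use Afin in auto)
  also have "\<dots> \<le> (\<Sum>i\<in>A. \<Sum>j\<in>A - {i}. \<Sum>k\<in>{-int K..int K}. card (?D i j k))"
    by (rule sum_mono, rule sum_mono, rule card_UN_le) auto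
  also have "\<dots> \<le> (\<Sum>i\<in>A. \<Sum>j\<in>A - {i}. \<Sum>k\<in>{-int K..int K}. B)"
    by (intro sum_mono) (use card_diff_le[OF Afin] cA in \<open>auto simp: B_def\<close>)
  also have "\<dots> = d * ((d - 1) * ((2*K+1) * B))"
  proof -
    have "nat (2 * int K + 1) = 2*K+1" by simp
    then show ?thesis using Afin by (simp add: cA card_Diff_subset)
  qed
  also have "\<dots> \<le> d * (d * ((2*K+1) * B))"
    by (intro mult_le_mono) auto
  finally have cW: "real (card W) \<le> real d * (real d * ((2*K+1) * real B))"
    by (metis of_nat_le_iff of_nat_mult of_nat_add of_nat_1 of_nat_numeral)
  have dn: "real (d - 2) + 2 = real d" using assms by simp
  have "real B \<le> real d ^ t * sqrt (real d / (real t + 1))"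
    using main_sum_bound[of t "d - 2"] unfolding dn B_def by (simp add: of_nat_sum)
  have "card W / real d ^ t \<le> real d * (real d * ((2*K+1) * sqrt (real d / (real t + 1))))"
  proof -
    have dpos: "real d ^ t > 0" using assms by simp
    have "card W \<le> real d * (real d * ((2*K+1) * (real d ^ t * sqrt (real d / (real t + 1)))))"
      using cW \<open>real B \<le> _\<close> by (smt (verit) mult_left_mono of_nat_0_le_iff mult_nonneg_nonneg)
    then show ?thesis using dpos by (simp add: field_simps)
  qed
  also have "\<dots> \<le> real d * (real d * ((2*K+1) * (sqrt (real d) / sqrt (real t))))"
  proof -
    have "sqrt (real d / (real t + 1)) \<le> sqrt (real d / real t)"
      using t by (intro real_sqrt_le_mono divide_left_mono) auto
    then show ?thesis by (intro mult_left_mono) (auto simp: real_sqrt_divide)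
  qed
  also have "\<dots> = (real d * real d * (2*K+1) * sqrt (real d)) / sqrt (real t)"
    by simp
  finally show "measure (bins_process d) {\<omega> \<in> space (bins_process d). \<exists>i\<in>{1..d}. \<exists>j\<in>{1..d}. i \<noteq> j \<and>
          \<bar>int (bin_load i t \<omega>) - int (bin_load j t \<omega>)\<bar> \<le> int K}
      \<le> (real d * real d * (2*K+1) * sqrt (real d)) / sqrt (real t)"
    unfolding meas .
qed


end
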